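(* Let $(\mathbf{W},\mathbf{b},\boldsymbol\rho)$ be a radial neural network with widths vector $\mathbf{n}=(n_0,\dots,n_L)$, weights $W_i\in\mathbb{R}^{n_i\times n_{i-1}}$, biases $b_i\in\mathbb{R}^{n_i}$ and radial rescaling activations $\rho_i=h_i^{(n_i)}$. Let $(\mathbf{W}^{\rm red},\mathbf{b}^{\rm red})$ be the weights and biases produced by the QR compression algorithm described below (for any choice of the complete QR decompositions in it). Then the feedforward function of $(\mathbf{W},\mathbf{b},\boldsymbol\rho)$ coincides with the feedforward function of the radial neural network $(\mathbf{W}^{\rm red},\mathbf{b}^{\rm red},\boldsymbol\rho^{\rm red})$ with widths vector $\mathbf{n}^{\rm red}$, where $\rho^{\rm red}_i=h_i^{(n^{\rm red}_i)}$ is the restriction of $\rho_i$ to $\mathbb{R}^{n^{\rm red}_i}\subseteq\mathbb{R}^{n_i}$.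
   Context: For $h:\mathbb{R}\to\mathbb{R}$ piecewise differentiable, $h^{(n)}:\mathbb{R}^n\to\mathbb{R}^n$ is $h^{(n)}(v)=h(|v|)v/|v|$ for $v\ne0$ and $h^{(n)}(0)=0$ (a radial rescaling function). A radial neural network with widths $(n_0,\dots,n_L)$ consists of $W_i\in\mathbb{R}^{n_i\times n_{i-1}}$, $b_i\in\mathbb{R}^{n_i}$ and radial rescaling functions $\rho_i$ on $\mathbb{R}^{n_i}$ ($i=1,\dots,L$); its feedforward function is $F=F_L$ with $F_0=\mathrm{id}_{\mathbb{R}^{n_0}}$, $F_i(x)=\rho_i(W_iF_{i-1}(x)+b_i)$. Reduced widths: $n^{\rm red}_0=n_0$, $n^{\rm red}_i=\min(n_i,n^{\rm red}_{i-1}+1)$ for $i=1,\dots,L-1$, $n^{\rm red}_L=n_L$. $\mathbb{R}^{k}$ is regarded as a subspace of $\mathbb{R}^{n}$ ($k\le n$) via the first $k$ coordinates; $\mathrm{Inc}_i\in\mathbb{R}^{n_i\times n^{\rm red}_i}$ is the matrix with ones on the main diagonal and zeros elsewhere. QR compression algorithm: set $A_1=[\,b_1\ W_1\,]\in\mathbb{R}^{n_1\times(n_0+1)}$. For $i=1,\dots,L-1$: compute a complete QR decomposition $A_i=Q_i\,\mathrm{Inc}_i\,R_i$ with $Q_i\in O(n_i)$ and $R_i$ upper triangular of size $n^{\rm red}_i\times(1+n^{\rm red}_{i-1})$; set $b^{\rm red}_i$ to be the first column of $R_i$ and $W^{\rm red}_i$ the remaining columns; set $A_{i+1}=[\,b_{i+1}\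 \ W_{i+1}Q_i\mathrm{Inc}_i\,]\in\mathbb{R}^{n_{i+1}\times(n^{\rm red}_i+1)}$. Finally $b^{\rm red}_L$ is the first column of $A_L$ and $W^{\rm red}_L$ the remaining columns. The algorithm also outputs $\mathbf{Q}=(Q_1,\dots,Q_{L-1})$. *)

theory Defs
  imports "Jordan_Normal_Form.Matrix"
begin

text \<open>Vectors in R^k are JNF vectors of dimension k; matrices in R^(m x k) are JNF
  matrices in carrier_mat m k.  Layers are indexed by 1..L via functions on nat.\<close>

definition vnorm :: "real vec \<Rightarrow> real" where
  "vnorm v = sqrt (v \<bullet> v)"

text \<open>Radial rescaling function h^(k) on R^k (k is the dimension of the argument):
  h^(k)(v) = h(|v|) v/|v| for v \<noteq> 0, and h^(k)(0) = 0.\<close>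
definition radial :: "(real \<Rightarrow> real) \<Rightarrow> real vec \<Rightarrow> real vec" where
  "radial h v = (if v = 0\<^sub>v (dim_vec v) then 0\<^sub>v (dim_vec v)
                 else (h (vnorm v) / vnorm v) \<cdot>\<^sub>v v)"

fun feedforward :: "(nat \<Rightarrow> real mat) \<Rightarrow> (nat \<Rightarrow> real vec) \<Rightarrow> (nat \<Rightarrow> real \<Rightarrow> real)
    \<Rightarrow> nat \<Rightarrow> real vec \<Rightarrow> real vec" where
  "feedforward W b h 0 x = x"
| "feedforward W b h (Suc i) x =
     radial (h (Suc i)) (W (Suc i) *\<^sub>v feedforward W b h i x + b (Suc i))"

definition radial_net :: "nat \<Rightarrow> (nat \<Rightarrow> nat) \<Rightarrow> (nat \<Rightarrow> real mat) \<Rightarrow> (nat \<Rightarrow> real vec) \<Rightarrow> bool"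
  where "radial_net L n W b \<longleftrightarrow>
    (\<forall>i\<in>{1..L}. W i \<in> carrier_mat (n i) (n (i - 1)) \<and> b i \<in> carrier_vec (n i))"

fun nred :: "(nat \<Rightarrow> nat) \<Rightarrow> nat \<Rightarrow> nat \<Rightarrow> nat" where
  "nred n L 0 = n 0"
| "nred n L (Suc i) = (if Suc i = L then n L else min (n (Suc i)) (nred n L i + 1))"

definition Inc :: "nat \<Rightarrow> nat \<Rightarrow> real mat" where
  "Inc m k = mat m k (\<lambda>(i, j). if i = j then 1 else 0)"

definition orth_group :: "nat \<Rightarrow> real mat set" where
  "orth_group m = {Q. Q \<in> carrier_mat m m \<and> transpose_mat Q * Q = 1\<^sub>m m}"

definition augment :: "real vec \<Rightarrow> real mat \<Rightarrow> real mat" where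
  "augment v M = mat (dim_vec v) (dim_col M + 1)
      (\<lambda>(i, j). if j = 0 then v $ i else M $$ (i, j - 1))"

definition first_col :: "real mat \<Rightarrow> real vec" where
  "first_col M = col M 0"

definition rest_cols :: "real mat \<Rightarrow> real mat" where
  "rest_cols M = mat (dim_row M) (dim_col M - 1) (\<lambda>(i, j). M $$ (i, j + 1))"

text \<open>The run of the QR compression algorithm with chosen complete QR decompositions
  A_i = Q_i Inc_i R_i (i = 1..L-1).\<close>
definition qr_compression_run ::
  "nat \<Rightarrow> (nat \<Rightarrow> nat) \<Rightarrow> (nat \<Rightarrow> real mat) \<Rightarrow> (nat \<Rightarrow> real vec)
   \<Rightarrow> (nat \<Rightarrow> real mat) \<Rightarrow> (nat \<Rightarrow> real mat) \<Rightarrow> (nat \<Rightarrow> real mat) \<Rightarrow> bool" where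
  "qr_compression_run L n W b A Q R \<longleftrightarrow>
     A 1 = augment (b 1) (W 1) \<and>
     (\<forall>i\<in>{1..<L}.
        Q i \<in> orth_group (n i) \<and>
        R i \<in> carrier_mat (nred n L i) (1 + nred n L (i - 1)) \<and>
        upper_triangular (R i) \<and>
        A i = Q i * Inc (n i) (nred n L i) * R i \<and>
        A (i + 1) = augment (b (i + 1)) (W (i + 1) * Q i * Inc (n i) (nred n L i)))"

definition W_red :: "nat \<Rightarrow> (nat \<Rightarrow> real mat) \<Rightarrow> (nat \<Rightarrow> real mat) \<Rightarrow> nat \<Rightarrow> real mat" where
  "W_red L A R i = (if i < L then rest_cols (R i) else rest_cols (A L))"

definition b_red :: "nat \<Rightarrow> (nat \<Rightarrow> real mat) \<Rightarrow> (nat \<Rightarrow> real mat) \<Rightarrow> nat \<Rightarrow> real vec" where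
  "b_red L A R i = (if i < L then first_col (R i) else first_col (A L))"

end

theory Submission
  imports Defs
begin

lemma iso_norm:
  fixes P :: "real mat"
  assumes P: "P \<in> carrier_mat m k" and PP: "transpose_mat P * P = 1\<^sub>m k" and v: "v \<in> carrier_vec k"
  shows "(P *\<^sub>v v) \<bullet> (P *\<^sub>v v) = v \<bullet> v"
proof -
  have "(transpose_mat P *\<^sub>v (P *\<^sub>v v)) \<bullet> v = (P *\<^sub>v v) \<bullet> (P *\<^sub>v v)"
    by (rule transpose_vec_mult_scalar[OF P v]) (use P v in auto)
  moreover have "transpose_mat P *\<^sub>v (P *\<^sub>v v) = v"
  proof -
    have "transpose_mat P *\<^sub>v (P *\<^sub>v v) = (transpose_mat P * P) *\<^sub>v v"
      using P v by (metis assoc_mult_mat_vec carrier_matD(1) carrier_matD(2) carrier_matI index_transpose_mat(2) index_transpose_mat(3))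
    then show ?thesis using PP v by simp
  qed
  ultimately show ?thesis by simp
qed

lemma self_scalar_zero:
  fixes v :: "real vec"
  assumes "v \<bullet> v = 0"
  shows "v = 0\<^sub>v (dim_vec v)"
proof -
  have "(\<Sum>i\<in>{0..<dim_vec v}. v $ i * v $ i) = 0" using assms by (simp add: scalar_prod_def)
  then have "\<forall>i\<in>{0..<dim_vec v}. v $ i * v $ i = 0"
    by (subst sum_nonneg_eq_0_iff[symmetric]) auto
  then show ?thesis by (intro eq_vecI) auto
qed

lemma mat_zero_vec: "P \<in> carrier_mat m k \<Longrightarrow> P *\<^sub>v 0\<^sub>v k = (0\<^sub>v m :: real vec)"
  by (intro eq_vecI) (auto simp: row_def)

lemma radial_iso:
  fixes P :: "real mat"
  assumes P: "P \<in> carrier_mat m k" and PP: "transpose_mat P * P = 1\<^sub>m k" and v: "v \<in> carrier_vec k"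
  shows "radial h (P *\<^sub>v v) = P *\<^sub>v radial h v"
proof (cases "v = 0\<^sub>v k")
  case True
  then show ?thesis using P v by (simp add: radial_def mat_zero_vec)
next
  case False
  have nv: "vnorm (P *\<^sub>v v) = vnorm v" unfolding vnorm_def using iso_norm[OF P PP v] by simp
  have "P *\<^sub>v v \<noteq> 0\<^sub>v m"
  proof
    assume "P *\<^sub>v v = 0\<^sub>v m"
    then have "v \<bullet> v = 0" using iso_norm[OF P PP v] by simp
    then show False using self_scalar_zero[of v] False v by (metis carrier_vecD)
  qed
  then show ?thesis using False P v nv by (simp add: radial_def mult_mat_vec)
qed

lemma vcons_mult:
  fixes R :: "real mat"
  assumes R: "R \<in> carrier_mat r (Suc k)" and y: "y \<in> carrier_vec k"
  shows "R *\<^sub>v vCons 1 y = first_col R + rest_cols R *\<^sub>v y"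
proof (rule eq_vecI)
  show "dim_vec (R *\<^sub>v vCons 1 y) = dim_vec (first_col R + rest_cols R *\<^sub>v y)"
    using R by (simp add: first_col_def rest_cols_def)
  fix i assume "i < dim_vec (first_col R + rest_cols R *\<^sub>v y)"
  then have i: "i < r" using R by (simp add: first_col_def rest_cols_def)
  have "(R *\<^sub>v vCons 1 y) $ i = (\<Sum>j\<in>{0..<Suc k}. R $$ (i, j) * vCons 1 y $ j)"
    using R i y by (simp add: scalar_prod_def)
  also have "\<dots> = R $$ (i, 0) + (\<Sum>j\<in>{0..<k}. R $$ (i, Suc j) * y $ j)"
    by (subst sum.atLeast0_lessThan_Suc_shift) simp
  also have "\<dots> = (first_col R + rest_cols R *\<^sub>v y) $ i"
    using R i y by (simp add: first_col_def rest_cols_def scalar_prod_def)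
  finally show "(R *\<^sub>v vCons 1 y) $ i = (first_col R + rest_cols R *\<^sub>v y) $ i" .
qed

lemma augment_facts:
  assumes M: "M \<in> carrier_mat r k" and v: "v \<in> carrier_vec r"
  shows "augment v M \<in> carrier_mat r (Suc k)" "first_col (augment v M) = v"
    "rest_cols (augment v M) = M"
  using M v by (auto simp: augment_def first_col_def rest_cols_def intro!: eq_vecI eq_matI)

lemma Inc_orth:
  assumes "k \<le> m"
  shows "transpose_mat (Inc m k) * Inc m k = 1\<^sub>m k"
proof (rule eq_matI)
  fix i j assume ij: "i < dim_row (1\<^sub>m k)" "j < dim_col (1\<^sub>m k)"
  have "(transpose_mat (Inc m k) * Inc m k) $$ (i, j) = (\<Sum>l\<in>{0..<m}. (if l = i then 1 else 0) * (if l = j then 1 else 0))"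
    using ij assms by (simp add: Inc_def scalar_prod_def)
  also have "\<dots> = (\<Sum>l\<in>{0..<m}. if l = i then (if i = j then 1 else 0) else 0)"
    by (rule sum.cong) auto
  also have "\<dots> = (if i = j then 1 else 0)" using ij assms by (simp add: sum.delta)
  finally show "(transpose_mat (Inc m k) * Inc m k) $$ (i, j) = 1\<^sub>m k $$ (i, j)" using ij by simp
qed (auto simp: Inc_def)

lemma fr_carrier:
  assumes "R \<in> carrier_mat r (Suc k)"
  shows "first_col R \<in> carrier_vec r" "rest_cols R \<in> carrier_mat r k"
  using assms by (auto simp: first_col_def rest_cols_def)

lemma dim_radial[simp]: "dim_vec (radial h v) = dim_vec v"
  by (simp add: radial_def)

lemma QInc_orth:
  fixes Q :: "real mat"
  assumes Q: "Q \<in> orth_group m" and k: "k \<le> m"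
  shows "Q * Inc m k \<in> carrier_mat m k" "transpose_mat (Q * Inc m k) * (Q * Inc m k) = 1\<^sub>m k"
proof -
  have Qc: "Q \<in> carrier_mat m m" and QQ: "transpose_mat Q * Q = 1\<^sub>m m" using Q by (auto simp: orth_group_def)
  have I: "Inc m k \<in> carrier_mat m k" by (simp add: Inc_def)
  show "Q * Inc m k \<in> carrier_mat m k" using Qc I by auto
  have "transpose_mat (Q * Inc m k) * (Q * Inc m k) = (transpose_mat (Inc m k) * transpose_mat Q) * (Q * Inc m k)"
    using Qc I by (simp add: transpose_mult)
  also have "\<dots> = transpose_mat (Inc m k) * ((transpose_mat Q * Q) * Inc m k)"
    using Qc I by (simp add: assoc_mult_mat[of _ k m _ m _ k])
  also have "\<dots> = 1\<^sub>m k" using QQ I Inc_orth[OF k] by simp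
  finally show "transpose_mat (Q * Inc m k) * (Q * Inc m k) = 1\<^sub>m k" .
qed

theorem theorem3:
  fixes L :: nat and n :: "nat \<Rightarrow> nat"
    and W :: "nat \<Rightarrow> real mat" and b :: "nat \<Rightarrow> real vec"
    and h :: "nat \<Rightarrow> real \<Rightarrow> real"
    and A Q R :: "nat \<Rightarrow> real mat"
  assumes "1 \<le> L"
    and "radial_net L n W b"
    and "qr_compression_run L n W b A Q R"
  shows "radial_net L (nred n L) (W_red L A R) (b_red L A R) \<and>
         (\<forall>x \<in> carrier_vec (n 0).
            feedforward W b h L x = feedforward (W_red L A R) (b_red L A R) h L x)"
proof -
  note net = assms(2)[unfolded radial_net_def]
  note run = assms(3)[unfolded qr_compression_run_def]
  have Wc: "W i \<in> carrier_mat (n i) (n (i - 1))" and bc: "b i \<in> carrier_vec (n i)"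
    if "1 \<le> i" "i \<le> L" for i using net that by auto
  have runi: "Q i \<in> orth_group (n i) \<and>
        R i \<in> carrier_mat (nred n L i) (1 + nred n L (i - 1)) \<and>
        A i = Q i * Inc (n i) (nred n L i) * R i \<and>
        A (i + 1) = augment (b (i + 1)) (W (i + 1) * Q i * Inc (n i) (nred n L i))"
    if "1 \<le> i" "i < L" for i using run that by auto
  have A1: "A 1 = augment (b 1) (W 1)" using run by auto
  have nle: "nred n L i \<le> n i" if "1 \<le> i" "i < L" for i
    using that by (cases i) auto
  have nL: "nred n L L = n L" using assms(1) by (cases L) auto
  have Ac: "A (Suc i) \<in> carrier_mat (n (Suc i)) (Suc (nred n L i))" if "i < L" for i
  proof (cases i)
    case 0
    then show ?thesis using A1 augment_facts(1)[OF Wc[of 1] bc[of 1]] that by simp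
  next
    case (Suc j)
    have QI: "Q i * Inc (n i) (nred n L i) \<in> carrier_mat (n i) (nred n L i)"
      using QInc_orth(1)[of "Q i" "n i" "nred n L i"] runi[of i] nle[of i] that Suc by auto
    have "W (Suc i) * Q i * Inc (n i) (nred n L i) \<in> carrier_mat (n (Suc i)) (nred n L i)"
    proof -
      have "W (Suc i) * Q i * Inc (n i) (nred n L i) = W (Suc i) * (Q i * Inc (n i) (nred n L i))"
      proof -
        have "W (Suc i) \<in> carrier_mat (n (Suc i)) (n i)" using Wc[of "Suc i"] that by auto
        moreover have "Q i \<in> carrier_mat (n i) (n i)" using runi[of i] that Suc by (auto simp: orth_group_def)
        moreover have "Inc (n i) (nred n L i) \<in> carrier_mat (n i) (nred n L i)" by (simp add: Inc_def)
        ultimately show ?thesis by (rule assoc_mult_mat)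
      qed
      then show ?thesis using Wc[of "Suc i"] QI that by auto
    qed
    then show ?thesis using augment_facts(1) runi[of i] bc[of "Suc i"] that Suc by auto
  qed
  have part1: "radial_net L (nred n L) (W_red L A R) (b_red L A R)"
    unfolding radial_net_def
  proof
    fix i assume i: "i \<in> {1..L}"
    show "W_red L A R i \<in> carrier_mat (nred n L i) (nred n L (i - 1)) \<and>
          b_red L A R i \<in> carrier_vec (nred n L i)"
    proof (cases "i < L")
      case True
      then have "R i \<in> carrier_mat (nred n L i) (Suc (nred n L (i - 1)))" using runi[of i] i by auto
      then show ?thesis using True by (auto intro!: carrier_vecI simp: W_red_def b_red_def first_col_def rest_cols_def)
    next
      case False
      then have iL: "i = L" using i by auto
      obtain j where j: "L = Suc j" using assms(1) by (cases L) auto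
      have "A L \<in> carrier_mat (n L) (Suc (nred n L (L - 1)))" using Ac[of j] j by auto
      then show ?thesis using iL nL by (auto intro!: carrier_vecI simp: W_red_def b_red_def first_col_def rest_cols_def)
    qed
  qed
  have part2: "feedforward W b h L x = feedforward (W_red L A R) (b_red L A R) h L x"
    if x: "x \<in> carrier_vec (n 0)" for x
  proof -
    define F where "F = (\<lambda>i. feedforward W b h i x)"
    define G where "G = (\<lambda>i. feedforward (W_red L A R) (b_red L A R) h i x)"
    have claim: "G i \<in> carrier_vec (nred n L i) \<and> W (Suc i) *\<^sub>v F i + b (Suc i) = A (Suc i) *\<^sub>v vCons 1 (G i)"
      if "i < L" for i
      using that
    proof (induction i)
      case 0
      have W1: "W 1 \<in> carrier_mat (n 1) (n 0)" and b1: "b 1 \<in> carrier_vec (n 1)"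
        using Wc[of 1] bc[of 1] 0 by auto
      have "A (Suc 0) *\<^sub>v vCons 1 x = augment (b 1) (W 1) *\<^sub>v vCons 1 x"
        using A1 by simp
      also have "\<dots> = first_col (augment (b 1) (W 1)) + rest_cols (augment (b 1) (W 1)) *\<^sub>v x"
        by (rule vcons_mult[OF augment_facts(1)[OF W1 b1] x])
      also have "\<dots> = b 1 + W 1 *\<^sub>v x"
        by (simp only: augment_facts(2,3)[OF W1 b1])
      also have "\<dots> = W 1 *\<^sub>v x + b 1"
        by (rule comm_add_vec[of _ "n 1"]) (use W1 b1 x in auto)
      finally show ?case using x by (simp add: F_def G_def)
    next
      case (Suc i)
      let ?P = "Q (Suc i) * Inc (n (Suc i)) (nred n L (Suc i))"
      have IH: "G i \<in> carrier_vec (nred n L i)" "W (Suc i) *\<^sub>v F i + b (Suc i) = A (Suc i) *\<^sub>v vCons 1 (G i)"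
        using Suc by auto
      have ri: "Q (Suc i) \<in> orth_group (n (Suc i))"
        "R (Suc i) \<in> carrier_mat (nred n L (Suc i)) (Suc (nred n L i))"
        "A (Suc i) = Q (Suc i) * Inc (n (Suc i)) (nred n L (Suc i)) * R (Suc i)"
        "A (Suc (Suc i)) = augment (b (Suc (Suc i))) (W (Suc (Suc i)) * Q (Suc i) * Inc (n (Suc i)) (nred n L (Suc i)))"
        using runi[of "Suc i"] Suc.prems by auto
      have Pc: "?P \<in> carrier_mat (n (Suc i)) (nred n L (Suc i))"
        and PP: "transpose_mat ?P * ?P = 1\<^sub>m (nred n L (Suc i))"
        using QInc_orth[OF ri(1) nle[of "Suc i"]] Suc.prems by auto
      have Ic: "Inc (n (Suc i)) (nred n L (Suc i)) \<in> carrier_mat (n (Suc i)) (nred n L (Suc i))"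
        by (simp add: Inc_def)
      have Qc: "Q (Suc i) \<in> carrier_mat (n (Suc i)) (n (Suc i))" using ri(1) by (simp add: orth_group_def)
      have v1: "vCons 1 (G i) \<in> carrier_vec (Suc (nred n L i))" using IH(1) by simp
      have Rv: "R (Suc i) *\<^sub>v vCons 1 (G i) \<in> carrier_vec (nred n L (Suc i))" using ri(2) v1 by auto
      have GS: "G (Suc i) = radial (h (Suc i)) (R (Suc i) *\<^sub>v vCons 1 (G i))"
      proof -
        have "R (Suc i) *\<^sub>v vCons 1 (G i) = first_col (R (Suc i)) + rest_cols (R (Suc i)) *\<^sub>v G i"
          using vcons_mult[OF ri(2) IH(1)] .
        also have "\<dots> = rest_cols (R (Suc i)) *\<^sub>v G i + first_col (R (Suc i))"
          using ri(2) IH(1) fr_carrier[OF ri(2)] by (intro comm_add_vec[of _ "nred n L (Suc i)"]) auto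
        finally show ?thesis using Suc.prems by (simp add: G_def W_red_def b_red_def)
      qed
      have FS: "F (Suc i) = ?P *\<^sub>v G (Suc i)"
      proof -
        have "F (Suc i) = radial (h (Suc i)) (A (Suc i) *\<^sub>v vCons 1 (G i))"
          using IH(2) by (simp add: F_def)
        also have "A (Suc i) *\<^sub>v vCons 1 (G i) = ?P *\<^sub>v (R (Suc i) *\<^sub>v vCons 1 (G i))"
          using ri(3) Pc ri(2) v1 by simp
        also have "radial (h (Suc i)) \<dots> = ?P *\<^sub>v G (Suc i)"
          using radial_iso[OF Pc PP Rv] GS by simp
        finally show ?thesis .
      qed
      have Gc: "G (Suc i) \<in> carrier_vec (nred n L (Suc i))" 
      proof (rule carrier_vecI)
        have "dim_vec (R (Suc i) *\<^sub>v vCons 1 (G i)) = nred n L (Suc i)" using Rv by (rule carrier_vecD)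
        then show "dim_vec (G (Suc i)) = nred n L (Suc i)" unfolding GS dim_radial .
      qed
      have WSS: "W (Suc (Suc i)) \<in> carrier_mat (n (Suc (Suc i))) (n (Suc i))"
        using Wc[of "Suc (Suc i)"] Suc.prems by auto
      have bSS: "b (Suc (Suc i)) \<in> carrier_vec (n (Suc (Suc i)))" using bc[of "Suc (Suc i)"] Suc.prems by auto
      have ri4: "A (Suc (Suc i)) = augment (b (Suc (Suc i))) (W (Suc (Suc i)) * ?P)"
        unfolding ri(4) assoc_mult_mat[OF WSS Qc Ic] ..
      have WPc: "W (Suc (Suc i)) * ?P \<in> carrier_mat (n (Suc (Suc i))) (nred n L (Suc i))"
        using WSS Pc by auto
      have "A (Suc (Suc i)) *\<^sub>v vCons 1 (G (Suc i)) = b (Suc (Suc i)) + (W (Suc (Suc i)) * ?P) *\<^sub>v G (Suc i)"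
        using vcons_mult[OF augment_facts(1)[OF WPc bSS] Gc] augment_facts[OF WPc bSS] ri4 by simp
      also have "\<dots> = (W (Suc (Suc i)) * ?P) *\<^sub>v G (Suc i) + b (Suc (Suc i))"
        using WPc Gc bSS by (intro comm_add_vec[of _ "n (Suc (Suc i))"]) auto
      also have "(W (Suc (Suc i)) * ?P) *\<^sub>v G (Suc i) = W (Suc (Suc i)) *\<^sub>v F (Suc i)"
        using FS WSS Pc Gc by simp
      finally show ?case using Gc by simp
    qed
    obtain j where j: "L = Suc j" using assms(1) by (cases L) auto
    have Gj: "G j \<in> carrier_vec (nred n L j)" and eq: "W L *\<^sub>v F j + b L = A L *\<^sub>v vCons 1 (G j)"
      using claim[of j] j by auto
    have ALc: "A L \<in> carrier_mat (n L) (Suc (nred n L j))" using Ac[of j] j by simp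
    have "A L *\<^sub>v vCons 1 (G j) = first_col (A L) + rest_cols (A L) *\<^sub>v G j"
      using vcons_mult[OF ALc Gj] .
    also have "\<dots> = rest_cols (A L) *\<^sub>v G j + first_col (A L)"
      using ALc Gj fr_carrier[OF ALc] by (intro comm_add_vec[of _ "n L"]) auto
    finally have "A L *\<^sub>v vCons 1 (G j) = W_red L A R L *\<^sub>v G j + b_red L A R L"
      by (simp add: W_red_def b_red_def)
    then have "F L = G L" using eq j by (simp add: F_def G_def)
    then show ?thesis by (simp add: F_def G_def)
  qed
  show ?thesis using part1 part2 by blast
qed

end
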